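(* Let $(V,\le,\preccurlyeq)$ be a mixed lattice vector space. Then for all $x,y\in V$, $$ s(x^u-y^u)\le s(x-y). $$
   Context: A mixed lattice vector space $(V,\le,\preccurlyeq)$ is a real vector space $V$ with two partial orderings $\le$ (the initial order) and $\preccurlyeq$ (the specific order), each making $V$ a partially ordered vector space (i.e. $u\le v$ implies $u+w\le v+w$ and $au\le av$ for all $w\in V$, $a\ge 0$; likewise for $\preccurlyeq$), with positive cones $V_p=\{x:0\le x\}$ and $V_{sp}=\{x:0\preccurlyeq x\}$, such that: (1) for all $x,y\in V$ the mixed upper envelope $x\curlyvee y=\min\{w\in V: w\succcurlyeq x \text{ and } w\ge y\}$ and the mixed lower envelope $x\curlywedge y=\max\{w\in V: w\preccurlyeq x \text{ and } w\le y\}$ exist, where the minimum and maximum are taken with respect to $\le$; (2) $x\preccurlyeq y$ implies $x\le y$; (3) $x\curlyvee y$ and $x\curlywedge y$ belong to $V_{sp}$ whenever $x,y\in V_{sp}$. Notation: $x^u=0\curlyvee x$, $x^l=0\curlyvee(-x)$, ${}^ux=x\curlyvee 0$, ${}^lx=(-x)\curlyvee 0$, and the symmetric generalized absolute value $s(x)=x^u+x^l$ (which also equals ${}^ux+{}^lx$). *)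

theory Defs
  imports Main "HOL.Real_Vector_Spaces"
begin

definition ordered_vs :: "('a::real_vector \<Rightarrow> 'a \<Rightarrow> bool) \<Rightarrow> bool" where
  "ordered_vs r \<longleftrightarrow>
     (\<forall>x. r x x) \<and>
     (\<forall>x y. r x y \<and> r y x \<longrightarrow> x = y) \<and>
     (\<forall>x y z. r x y \<and> r y z \<longrightarrow> r x z) \<and>
     (\<forall>u v w. r u v \<longrightarrow> r (u + w) (v + w)) \<and>
     (\<forall>u v (a::real). r u v \<and> 0 \<le> a \<longrightarrow> r (a *\<^sub>R u) (a *\<^sub>R v))"

definition is_least_wrt :: "('a \<Rightarrow> 'a \<Rightarrow> bool) \<Rightarrow> 'a set \<Rightarrow> 'a \<Rightarrow> bool" where
  "is_least_wrt r S m \<longleftrightarrow> m \<in> S \<and> (\<forall>w\<in>S. r m w)"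

definition is_greatest_wrt :: "('a \<Rightarrow> 'a \<Rightarrow> bool) \<Rightarrow> 'a set \<Rightarrow> 'a \<Rightarrow> bool" where
  "is_greatest_wrt r S m \<longleftrightarrow> m \<in> S \<and> (\<forall>w\<in>S. r w m)"

definition mup :: "('a \<Rightarrow> 'a \<Rightarrow> bool) \<Rightarrow> ('a \<Rightarrow> 'a \<Rightarrow> bool) \<Rightarrow> 'a \<Rightarrow> 'a \<Rightarrow> 'a" where
  "mup le sle x y = (THE m. is_least_wrt le {w. sle x w \<and> le y w} m)"

definition mlow :: "('a \<Rightarrow> 'a \<Rightarrow> bool) \<Rightarrow> ('a \<Rightarrow> 'a \<Rightarrow> bool) \<Rightarrow> 'a \<Rightarrow> 'a \<Rightarrow> 'a" where
  "mlow le sle x y = (THE m. is_greatest_wrt le {w. sle w x \<and> le w y} m)"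

definition mixed_lattice_vs ::
  "('a::real_vector \<Rightarrow> 'a \<Rightarrow> bool) \<Rightarrow> ('a \<Rightarrow> 'a \<Rightarrow> bool) \<Rightarrow> bool" where
  "mixed_lattice_vs le sle \<longleftrightarrow>
     ordered_vs le \<and> ordered_vs sle \<and>
     (\<forall>x y. \<exists>m. is_least_wrt le {w. sle x w \<and> le y w} m) \<and>
     (\<forall>x y. \<exists>m. is_greatest_wrt le {w. sle w x \<and> le w y} m) \<and>
     (\<forall>x y. sle x y \<longrightarrow> le x y) \<and>
     (\<forall>x y. sle 0 x \<and> sle 0 y \<longrightarrow> sle 0 (mup le sle x y) \<and> sle 0 (mlow le sle x y))"

definition upart :: "('a::real_vector \<Rightarrow> 'a \<Rightarrow> bool) \<Rightarrow> ('a \<Rightarrow> 'a \<Rightarrow> bool) \<Rightarrow> 'a \<Rightarrow> 'a" where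
  "upart le sle x = mup le sle 0 x"

definition lpart :: "('a::real_vector \<Rightarrow> 'a \<Rightarrow> bool) \<Rightarrow> ('a \<Rightarrow> 'a \<Rightarrow> bool) \<Rightarrow> 'a \<Rightarrow> 'a" where
  "lpart le sle x = mup le sle 0 (- x)"

definition sabs :: "('a::real_vector \<Rightarrow> 'a \<Rightarrow> bool) \<Rightarrow> ('a \<Rightarrow> 'a \<Rightarrow> bool) \<Rightarrow> 'a \<Rightarrow> 'a" where
  "sabs le sle x = upart le sle x + lpart le sle x"

end

theory Submission
  imports Defs
begin

lemma ovs_trans: "ordered_vs r \<Longrightarrow> r x y \<Longrightarrow> r y z \<Longrightarrow> r x z"
  unfolding ordered_vs_def by meson

lemma ovs_anti: "ordered_vs r \<Longrightarrow> r x y \<Longrightarrow> r y x \<Longrightarrow> x = y"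
  unfolding ordered_vs_def by meson

lemma ovs_transl: "ordered_vs r \<Longrightarrow> r u v \<Longrightarrow> r (u + w) (v + w)"
  unfolding ordered_vs_def by meson

lemma lpart_upart: "lpart le sle z = upart le sle (- z)"
  by (simp add: lpart_def upart_def)

lemma mup_prop:
  assumes M: "mixed_lattice_vs le sle"
  shows "sle x (mup le sle x y) \<and> le y (mup le sle x y) \<and>
         (\<forall>w. sle x w \<and> le y w \<longrightarrow> le (mup le sle x y) w)"
proof -
  have "\<forall>x y. \<exists>m. is_least_wrt le {w. sle x w \<and> le y w} m"
    using M unfolding mixed_lattice_vs_def by (elim conjE)
  then obtain m where m: "is_least_wrt le {w. sle x w \<and> le y w} m"
    by blast
  have Ol: "ordered_vs le" using M unfolding mixed_lattice_vs_def by (elim conjE)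
  have "mup le sle x y = m"
    unfolding mup_def
  proof (rule the_equality)
    show "is_least_wrt le {w. sle x w \<and> le y w} m" by fact
    fix n assume n: "is_least_wrt le {w. sle x w \<and> le y w} n"
    have "le n m" using n m unfolding is_least_wrt_def by simp
    moreover have "le m n" using n m unfolding is_least_wrt_def by simp
    ultimately show "n = m" using ovs_anti[OF Ol] by simp
  qed
  with m show ?thesis unfolding is_least_wrt_def by auto
qed

lemma ord_add:
  assumes O: "ordered_vs r" and "r a b" "r c d"
  shows "r (a + c) (b + d)"
proof -
  have "r (a + c) (b + c)" using ovs_transl[OF O assms(2)] .
  moreover have "r (c + b) (d + b)" using ovs_transl[OF O assms(3)] .
  hence "r (b + c) (b + d)" by (simp add: add.commute)
  ultimately show ?thesis using ovs_trans[OF O] by simp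
qed

lemma key:
  assumes M: "mixed_lattice_vs le sle"
  shows "le (upart le sle (upart le sle x - upart le sle y)) (upart le sle (x - y))"
proof -
  have Ol: "ordered_vs le" and Os: "ordered_vs sle" using M unfolding mixed_lattice_vs_def by simp_all
  let ?b = "upart le sle (x - y)"
  have b: "sle 0 ?b" "le (x - y) ?b" using mup_prop[OF M, of 0 "x - y"] unfolding upart_def by auto
  have y: "sle 0 (upart le sle y)" "le y (upart le sle y)"
    using mup_prop[OF M, of 0 y] unfolding upart_def by auto
  have xl: "\<And>w. sle 0 w \<Longrightarrow> le x w \<Longrightarrow> le (upart le sle x) w"
    using mup_prop[OF M, of 0 x] unfolding upart_def by auto
  have "sle (0 + 0) (?b + upart le sle y)" using ord_add[where r=sle, OF Os b(1) y(1)] .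
  hence s1: "sle 0 (?b + upart le sle y)" by simp
  have "le (x - y + y) (?b + upart le sle y)" using ord_add[where r=le, OF Ol b(2) y(2)] .
  hence "le x (?b + upart le sle y)" by simp
  with s1 have "le (upart le sle x) (?b + upart le sle y)" by (rule xl)
  hence "le (upart le sle x + - upart le sle y) (?b + upart le sle y + - upart le sle y)"
    by (rule ovs_transl[OF Ol])
  hence c: "le (upart le sle x - upart le sle y) ?b" by simp
  have zl: "\<And>w. sle 0 w \<Longrightarrow> le (upart le sle x - upart le sle y) w \<Longrightarrow>
      le (upart le sle (upart le sle x - upart le sle y)) w"
    using mup_prop[OF M, of 0 "upart le sle x - upart le sle y"] unfolding upart_def by auto
  show ?thesis by (rule zl[OF b(1) c])
qed

theorem lemma2p8:
  fixes le sle :: "'a::real_vector \<Rightarrow> 'a \<Rightarrow> bool"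
  assumes "mixed_lattice_vs le sle"
  shows "\<forall>x y. le (sabs le sle (upart le sle x - upart le sle y)) (sabs le sle (x - y))"
proof (intro allI)
  fix x y :: 'a
  have Ol: "ordered_vs le" using assms unfolding mixed_lattice_vs_def by simp
  have h1: "le (upart le sle (upart le sle x - upart le sle y)) (upart le sle (x - y))"
    by (rule key[OF assms])
  have h2: "le (upart le sle (upart le sle y - upart le sle x)) (upart le sle (y - x))"
    by (rule key[OF assms])
  have e1: "lpart le sle (upart le sle x - upart le sle y) = upart le sle (upart le sle y - upart le sle x)"
    by (simp only: lpart_upart minus_diff_eq)
  have e2: "lpart le sle (x - y) = upart le sle (y - x)"
    by (simp only: lpart_upart minus_diff_eq)
  have l2: "le (lpart le sle (upart le sle x - upart le sle y)) (lpart le sle (x - y))"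
    unfolding e1 e2 by (fact h2)
  show "le (sabs le sle (upart le sle x - upart le sle y)) (sabs le sle (x - y))"
    unfolding sabs_def by (fact ord_add[where r=le, OF Ol h1 l2])
qed

end
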